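(* Let $n\ge3$ be an odd integer. The cycle $C_n$ admits an optimal extended irregular dominating set if and only if there exists a strong starter in $\mathbb{Z}_n$.
   Context: $C_n$ is the cycle on $n$ vertices. In a finite simple graph $\Gamma=(V,E)$ with distance $d$, a vertex $v$ carrying a non-negative integer label $\ell$ dominates (covers) exactly the vertices $u$ with $d(u,v)=\ell$; a vertex labeled $0$ dominates only itself. For $k\ge0$, a $k$-extended irregular dominating set is a set $S\subseteq V$ of $k$ vertices with a labeling $\lambda:S\to\mathbb{Z}_{\ge0}$ with distinct labels, such that every vertex of $V$ is dominated by some vertex of $S$; it is assumed that some vertex of $S$ has label $0$. $\gamma_e(\Gamma)$ is the minimum cardinality of such a set; a $k$-extended irregular dominating set is optimal if $k=\gamma_e(\Gamma)$. For an additive abelian group $G$ of odd order $g$, a starter is a set of unordered pairs $\{\{x_i,y_i\}:1\le i\le (g-1)/2\}$ such that $\{x_i,y_i: 1\le i\le (g-1)/2\}=G\setminus\{0\}$ and $\{\pm(x_i-y_i):1\le i\le (g-1)/2\}=G\setminus\{0\}$; it is strong if moreover the sums $x_i+y_i$ are pairwise distinct and all nonzero. *)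

theory Defs
  imports Main
begin

definition is_walk :: "('a \<Rightarrow> 'a \<Rightarrow> bool) \<Rightarrow> 'a list \<Rightarrow> bool" where
  "is_walk E xs \<longleftrightarrow> (\<forall>i. Suc i < length xs \<longrightarrow> E (xs ! i) (xs ! Suc i))"

text \<open>Graph distance: the least number of edges on a walk from u to v inside V.
  (Only used for connected graphs, where it is well defined.)\<close>
definition gdist :: "'a set \<Rightarrow> ('a \<Rightarrow> 'a \<Rightarrow> bool) \<Rightarrow> 'a \<Rightarrow> 'a \<Rightarrow> nat" where
  "gdist V E u v = (LEAST k. \<exists>xs. length xs = Suc k \<and> hd xs = u \<and> last xs = v
                                 \<and> set xs \<subseteq> V \<and> is_walk E xs)"

definition ext_irr_dom :: "'a set \<Rightarrow> ('a \<Rightarrow> 'a \<Rightarrow> bool) \<Rightarrow> 'a set \<Rightarrow> ('a \<Rightarrow> nat) \<Rightarrow> bool" where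
  "ext_irr_dom V E S lam \<longleftrightarrow>
     S \<subseteq> V \<and> inj_on lam S \<and> (\<exists>v\<in>S. lam v = 0) \<and>
     (\<forall>u\<in>V. \<exists>v\<in>S. gdist V E u v = lam v)"

definition gamma_e :: "'a set \<Rightarrow> ('a \<Rightarrow> 'a \<Rightarrow> bool) \<Rightarrow> nat" where
  "gamma_e V E = (LEAST k. \<exists>S lam. ext_irr_dom V E S lam \<and> card S = k)"

definition optimal_ext_irr_dom :: "'a set \<Rightarrow> ('a \<Rightarrow> 'a \<Rightarrow> bool) \<Rightarrow> 'a set \<Rightarrow> ('a \<Rightarrow> nat) \<Rightarrow> bool" where
  "optimal_ext_irr_dom V E S lam \<longleftrightarrow> ext_irr_dom V E S lam \<and> card S = gamma_e V E"

definition cycle_V :: "nat \<Rightarrow> nat set" where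
  "cycle_V n = {0..<n}"

definition cycle_E :: "nat \<Rightarrow> nat \<Rightarrow> nat \<Rightarrow> bool" where
  "cycle_E n i j \<longleftrightarrow> i < n \<and> j < n \<and> (j = Suc i mod n \<or> i = Suc j mod n)"

definition starter_Zn :: "nat \<Rightarrow> (nat \<Rightarrow> int) \<Rightarrow> (nat \<Rightarrow> int) \<Rightarrow> bool" where
  "starter_Zn n x y \<longleftrightarrow>
     (let I = {1..(n - 1) div 2}; m = int n in
       (\<Union>i\<in>I. {x i mod m, y i mod m}) = {1..<m} \<and>
       (\<Union>i\<in>I. {(x i - y i) mod m, (y i - x i) mod m}) = {1..<m})"

definition strong_starter_Zn :: "nat \<Rightarrow> (nat \<Rightarrow> int) \<Rightarrow> (nat \<Rightarrow> int) \<Rightarrow> bool" where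
  "strong_starter_Zn n x y \<longleftrightarrow>
     starter_Zn n x y \<and>
     (let I = {1..(n - 1) div 2}; m = int n in
       inj_on (\<lambda>i. (x i + y i) mod m) I \<and> (\<forall>i\<in>I. (x i + y i) mod m \<noteq> 0))"

end

theory Submission
  imports Defs "HOL-Number_Theory.Cong"
begin

lemma is_walk_Cons: "is_walk E (a # xs) \<longleftrightarrow> (xs = [] \<or> E a (hd xs)) \<and> is_walk E xs"
proof (cases xs)
  case Nil then show ?thesis by (simp add: is_walk_def)
next
  case (Cons b ys)
  show ?thesis unfolding is_walk_def
  proof
    assume h: "\<forall>i. Suc i < length (a # xs) \<longrightarrow> E ((a # xs) ! i) ((a # xs) ! Suc i)"
    have "E a b" using h[rule_format, of 0] Cons by simp
    moreover have "\<forall>i. Suc i < length xs \<longrightarrow> E (xs ! i) (xs ! Suc i)"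
      using h by (metis Suc_less_eq length_Cons nth_Cons_Suc)
    ultimately show "(xs = [] \<or> E a (hd xs)) \<and> (\<forall>i. Suc i < length xs \<longrightarrow> E (xs ! i) (xs ! Suc i))"
      using Cons by simp
  next
    assume h: "(xs = [] \<or> E a (hd xs)) \<and> (\<forall>i. Suc i < length xs \<longrightarrow> E (xs ! i) (xs ! Suc i))"
    show "\<forall>i. Suc i < length (a # xs) \<longrightarrow> E ((a # xs) ! i) ((a # xs) ! Suc i)"
    proof (intro allI impI)
      fix i assume "Suc i < length (a # xs)"
      then show "E ((a # xs) ! i) ((a # xs) ! Suc i)"
        using h Cons by (cases i) auto
    qed
  qed
qed

lemma cong_comb_add:
  fixes a b c d x y m :: int
  assumes "[a = b] (mod m)" "[c = d] (mod m)" "x - y = (a - b) + (c - d)"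
  shows "[x = y] (mod m)"
  using assms unfolding cong_iff_dvd_diff by (metis dvd_add)

lemma cong_comb_diff:
  fixes a b c d x y m :: int
  assumes "[a = b] (mod m)" "[c = d] (mod m)" "x - y = (a - b) - (c - d)"
  shows "[x = y] (mod m)"
  using assms unfolding cong_iff_dvd_diff by (metis dvd_diff)

lemma walk_lower:
  assumes "is_walk (cycle_E n) xs" "xs \<noteq> []"
  shows "\<exists>t. \<bar>t\<bar> \<le> int (length xs - 1) \<and> [int (last xs) - int (hd xs) = t] (mod int n)"
  using assms
proof (induction xs)
  case Nil then show ?case by simp
next
  case (Cons a xs)
  show ?case
  proof (cases "xs = []")
    case True then show ?thesis by (auto intro: cong_refl)
  next
    case False
    with Cons.prems have E: "cycle_E n a (hd xs)" and w: "is_walk (cycle_E n) xs"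
      by (auto simp: is_walk_Cons)
    from Cons.IH[OF w False] obtain t where t: "\<bar>t\<bar> \<le> int (length xs - 1)"
      "[int (last xs) - int (hd xs) = t] (mod int n)" by blast
    from E have "[int (hd xs) = int a + 1] (mod int n) \<or> [int a = int (hd xs) + 1] (mod int n)"
    proof -
      have "hd xs = Suc a mod n \<or> a = Suc (hd xs) mod n" using E by (simp add: cycle_E_def)
      then show ?thesis
      proof
        assume "hd xs = Suc a mod n"
        then have "int (hd xs) = (int a + 1) mod int n" by (simp add: of_nat_mod add.commute)
        then show ?thesis unfolding cong_def by simp
      next
        assume "a = Suc (hd xs) mod n"
        then have "int a = (int (hd xs) + 1) mod int n" by (simp add: of_nat_mod add.commute)
        then show ?thesis unfolding cong_def by simp
      qed
    qed
    then show ?thesis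
    proof
      assume h: "[int (hd xs) = int a + 1] (mod int n)"
      have "[int (last xs) - int a = t + 1] (mod int n)"
        by (rule cong_comb_add[OF t(2) h]) simp
      moreover have "\<bar>t + 1\<bar> \<le> int (length (a # xs) - 1)" using t(1) False
        by (cases xs) auto
      ultimately show ?thesis using False by (auto simp: last.simps)
    next
      assume h: "[int a = int (hd xs) + 1] (mod int n)"
      have "[int (last xs) - int a = t - 1] (mod int n)"
        by (rule cong_comb_diff[OF t(2) h]) simp
      moreover have "\<bar>t - 1\<bar> \<le> int (length (a # xs) - 1)" using t(1) False
        by (cases xs) auto
      ultimately show ?thesis using False by (auto simp: last.simps)
    qed
  qed
qed

definition walk_up :: "nat \<Rightarrow> nat \<Rightarrow> nat \<Rightarrow> nat list" where
  "walk_up n u k = map (\<lambda>i. (u + i) mod n) [0..<Suc k]"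

lemma walk_up_props:
  assumes "n > 0" "u < n"
  shows "is_walk (cycle_E n) (walk_up n u k)" "hd (walk_up n u k) = u"
    "last (walk_up n u k) = (u + k) mod n" "length (walk_up n u k) = Suc k"
    "set (walk_up n u k) \<subseteq> cycle_V n"
proof -
  show "is_walk (cycle_E n) (walk_up n u k)"
    unfolding is_walk_def walk_up_def cycle_E_def
    using assms by (auto simp: nth_append mod_Suc_eq simp del: upt_Suc)
  show "hd (walk_up n u k) = u" using assms by (simp add: walk_up_def hd_map del: upt_Suc)
  show "last (walk_up n u k) = (u + k) mod n" by (simp add: walk_up_def last_map del: upt_Suc)
  show "length (walk_up n u k) = Suc k" by (simp add: walk_up_def)
  show "set (walk_up n u k) \<subseteq> cycle_V n" using assms by (auto simp: walk_up_def cycle_V_def)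
qed

lemma is_walk_rev:
  assumes sym: "\<And>a b. E a b \<Longrightarrow> E b a" and w: "is_walk E xs"
  shows "is_walk E (rev xs)"
  unfolding is_walk_def
proof (intro allI impI)
  fix i assume i: "Suc i < length (rev xs)"
  define j where "j = length xs - Suc (Suc i)"
  have j: "Suc j < length xs" using i by (simp add: j_def)
  have "E (xs ! j) (xs ! Suc j)" using w j by (simp add: is_walk_def)
  moreover have "rev xs ! i = xs ! Suc j" using i by (simp add: rev_nth j_def Suc_diff_Suc)
  moreover have "rev xs ! Suc i = xs ! j" using i by (simp add: rev_nth j_def)
  ultimately show "E (rev xs ! i) (rev xs ! Suc i)" using sym by simp
qed


definition cd :: "nat \<Rightarrow> nat \<Rightarrow> nat \<Rightarrow> nat" where
  "cd n u v = nat (min ((int v - int u) mod int n) ((int u - int v) mod int n))"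

lemma cong_to_mod:
  fixes a b c N :: int
  assumes "[a = b + c] (mod N)" "0 \<le> c" "c < N"
  shows "(a - b) mod N = c"
proof -
  have "(a - b) mod N = (b + c - b) mod N"
    using assms(1) unfolding cong_def by (metis mod_diff_left_eq)
  then show ?thesis using assms(2,3) by simp
qed

lemma mod_to_cong:
  fixes a b c N :: int
  assumes "(a - b) mod N = c"
  shows "[a = b + c] (mod N)"
proof -
  have "[a - b = c] (mod N)" using assms unfolding cong_def by (metis mod_mod_trivial)
  then show ?thesis unfolding cong_iff_dvd_diff by (simp add: algebra_simps)
qed

lemma gdist_eq:
  assumes "n > 0" "u < n" "v < n"
  shows "gdist (cycle_V n) (cycle_E n) u v = cd n u v"
proof -
  let ?P = "\<lambda>k. \<exists>xs. length xs = Suc k \<and> hd xs = u \<and> last xs = v \<and> set xs \<subseteq> cycle_V n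
                 \<and> is_walk (cycle_E n) xs"
  define N where "N = int n"
  define d1 where "d1 = (int v - int u) mod N"
  define d2 where "d2 = (int u - int v) mod N"
  have Npos: "N > 0" using assms by (simp add: N_def)
  have d1r: "0 \<le> d1" "d1 < N" using Npos by (auto simp: d1_def)
  have d2r: "0 \<le> d2" "d2 < N" using Npos by (auto simp: d2_def)
  have cdd: "cd n u v = nat (min d1 d2)" by (simp add: cd_def d1_def d2_def N_def)
  have P: "?P (cd n u v)"
  proof (cases "d1 \<le> d2")
    case True
    have "int ((u + nat d1) mod n) = (int u + d1) mod N"
      using d1r by (simp add: N_def of_nat_mod)
    also have "\<dots> = (int u + (int v - int u)) mod N" by (simp add: d1_def mod_add_right_eq)
    also have "\<dots> = int v" using assms by (simp add: N_def)
    finally have "(u + nat d1) mod n = v" by simp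
    then show ?thesis using walk_up_props[OF assms(1,2), of "nat d1"] True cdd
      by (intro exI[of _ "walk_up n u (nat d1)"]) simp
  next
    case False
    have "int ((v + nat d2) mod n) = (int v + d2) mod N"
      using d2r by (simp add: N_def of_nat_mod)
    also have "\<dots> = (int v + (int u - int v)) mod N" by (simp add: d2_def mod_add_right_eq)
    also have "\<dots> = int u" using assms by (simp add: N_def)
    finally have e: "(v + nat d2) mod n = u" by simp
    have sym: "\<And>a b. cycle_E n a b \<Longrightarrow> cycle_E n b a" by (auto simp: cycle_E_def)
    have "hd (rev (walk_up n v (nat d2))) = u"
      using walk_up_props[OF assms(1,3), of "nat d2"] e
      by (metis hd_rev)
    moreover have "last (rev (walk_up n v (nat d2))) = v"
      using walk_up_props[OF assms(1,3), of "nat d2"]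
      by (metis last_rev)
    ultimately show ?thesis using walk_up_props[OF assms(1,3), of "nat d2"] False cdd
        is_walk_rev[OF sym]
      by (intro exI[of _ "rev (walk_up n v (nat d2))"]) simp
  qed
  have low: "cd n u v \<le> k" if "?P k" for k
  proof -
    from that obtain xs where xs: "length xs = Suc k" "hd xs = u" "last xs = v"
      "is_walk (cycle_E n) xs" by blast
    then have "xs \<noteq> []" by auto
    from walk_lower[OF xs(4) this] xs obtain t where t: "\<bar>t\<bar> \<le> int k"
      "[int v - int u = t] (mod N)" by (auto simp: N_def)
    have e1: "d1 = t mod N" using t(2) by (simp add: d1_def cong_def)
    have "d2 = (- (int v - int u)) mod N" by (simp add: d2_def)
    also have "\<dots> = (- t) mod N" using t(2) unfolding cong_def by (metis mod_minus_cong)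
    finally have e2: "d2 = (- t) mod N" .
    have "min d1 d2 \<le> \<bar>t\<bar>"
    proof (cases "t \<ge> 0")
      case True
      then have "t mod N \<le> t" using Npos by (simp add: zmod_le_nonneg_dividend)
      then show ?thesis using e1 True by simp
    next
      case False
      then have "(-t) mod N \<le> -t" using Npos by (simp add: zmod_le_nonneg_dividend)
      then show ?thesis using e2 False by simp
    qed
    then show ?thesis using t(1) cdd by simp
  qed
  show ?thesis unfolding gdist_def
    by (rule Least_equality) (use P low in auto)
qed

lemma cd_char:
  assumes "odd n" "u < n" "v < n"
  shows "cd n u v = l \<longleftrightarrow> l \<le> (n - 1) div 2 \<and>
     ([int u = int v + int l] (mod int n) \<or> [int u = int v - int l] (mod int n))"
proof -
  define N where "N = int n"
  define h where "h = (n - 1) div 2"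
  define d1 where "d1 = (int v - int u) mod N"
  define d2 where "d2 = (int u - int v) mod N"
  have Nh: "N = 2 * int h + 1" using assms(1) by (auto simp: N_def h_def elim!: oddE)
  have Npos: "N > 0" using Nh by simp
  have d1r: "0 \<le> d1" "d1 < N" using Npos by (auto simp: d1_def)
  have d2r: "0 \<le> d2" "d2 < N" using Npos by (auto simp: d2_def)
  have cdd: "cd n u v = nat (min d1 d2)" by (simp add: cd_def d1_def d2_def N_def)
  have d21: "d2 = (if d1 = 0 then 0 else N - d1)"
  proof -
    have "d2 = (- (int v - int u)) mod N" by (simp add: d2_def)
    moreover have "(- (int v - int u)) mod N = (if d1 = 0 then 0 else N - d1)"
      unfolding d1_def by (rule zmod_zminus1_eq_if)
    ultimately show ?thesis by simp
  qed
  show ?thesis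
  proof
    assume l: "cd n u v = l"
    have "2 * min d1 d2 \<le> N" using d21 d1r by (auto simp: min_def)
    then have lh: "l \<le> h" using l cdd Nh by linarith
    have "[int u = int v + int l] (mod int n) \<or> [int u = int v - int l] (mod int n)"
    proof (cases "d1 \<le> d2")
      case True
      then have "int l = d1" using l cdd d1r by simp
      then have "[int v = int u + int l] (mod N)" using mod_to_cong[of "int v" "int u" N d1]
        by (simp add: d1_def)
      then have "[int u = int v - int l] (mod N)" unfolding cong_iff_dvd_diff
        by (metis dvd_minus_iff minus_diff_eq diff_diff_eq2 add_diff_cancel_left' diff_add_eq)
      then show ?thesis by (simp add: N_def)
    next
      case False
      then have "int l = d2" using l cdd d2r by simp
      then have "[int u = int v + int l] (mod N)" using mod_to_cong[of "int u" "int v" N d2]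
        by (simp add: d2_def)
      then show ?thesis by (simp add: N_def)
    qed
    then show "l \<le> (n - 1) div 2 \<and> ([int u = int v + int l] (mod int n) \<or> [int u = int v - int l] (mod int n))"
      using lh by (simp add: h_def)
  next
    assume a: "l \<le> (n - 1) div 2 \<and> ([int u = int v + int l] (mod int n) \<or> [int u = int v - int l] (mod int n))"
    then have lh: "int l \<le> int h" by (simp add: h_def)
    from a have "[int u = int v + int l] (mod N) \<or> [int u = int v - int l] (mod N)"
      by (simp add: N_def)
    then show "cd n u v = l"
    proof
      assume c: "[int u = int v + int l] (mod N)"
      have e: "d2 = int l" unfolding d2_def by (rule cong_to_mod[OF c]) (use lh Nh in auto)
      have "min d1 d2 = int l"
      proof (cases "d1 = 0")
        case True then show ?thesis using e d21 by simp
      next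
        case False then show ?thesis using e d21 lh Nh by simp
      qed
      then show ?thesis using cdd by simp
    next
      assume c: "[int u = int v - int l] (mod N)"
      have c': "[int v = int u + int l] (mod N)" using c unfolding cong_iff_dvd_diff
        by (metis dvd_minus_iff minus_diff_eq diff_diff_eq2 add_diff_cancel_left' diff_add_eq)
      have e: "d1 = int l" unfolding d1_def by (rule cong_to_mod[OF c']) (use lh Nh in auto)
      then have "d2 = (if int l = 0 then 0 else N - int l)" using d21 by simp
      then have "min d1 d2 = int l" using e lh Nh by auto
      then show ?thesis using cdd by simp
    qed
  qed
qed


lemma gd_char:
  assumes "odd n" "u < n" "v < n"
  shows "gdist (cycle_V n) (cycle_E n) u v = l \<longleftrightarrow> l \<le> (n - 1) div 2 \<and>
     ([int u = int v + int l] (mod int n) \<or> [int u = int v - int l] (mod int n))"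
proof -
  have "n > 0" using assms(1) by (cases n) auto
  then show ?thesis using gdist_eq[of n u v] cd_char[OF assms] assms by simp
qed

lemma dvd_lin3:
  fixes N a b c z p q r :: int
  assumes "N dvd a" "N dvd b" "N dvd c" "z = p * a + q * b + r * c"
  shows "N dvd z"
  using assms by (simp add: dvd_add dvd_mult)

lemma coprime2:
  fixes N :: int
  assumes "odd N" shows "coprime 2 N"
  using assms by simp

lemma cancel2:
  fixes N a b :: int
  assumes "odd N" "[2 * a = 2 * b] (mod N)"
  shows "[a = b] (mod N)"
  using assms cong_mult_lcancel[OF coprime2[OF assms(1)]] by blast

lemma cong_nat_eq:
  assumes "u < n" "v < n" "[int u = int v] (mod int n)"
  shows "u = v"
  using cong_less_imp_eq_int[of "int u" "int n" "int v"] assms by simp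

lemma pm_eq:
  fixes a b h :: int
  assumes "1 \<le> a" "a \<le> h" "1 \<le> b" "b \<le> h" "N = 2 * h + 1"
    "[a = b] (mod N) \<or> [a = - b] (mod N)"
  shows "a = b"
  using assms(6)
proof
  assume "[a = b] (mod N)"
  then show ?thesis using cong_less_imp_eq_int[of a N b] assms(1-5) by simp
next
  assume "[a = - b] (mod N)"
  then have "[a + b = 0] (mod N)" unfolding cong_iff_dvd_diff by simp
  then have "a + b = 0" using cong_less_imp_eq_int[of "a + b" N 0] assms(1-5) by simp
  then show ?thesis using assms by simp
qed

lemma diffs_union:
  fixes N :: int and h :: nat
  assumes "N = 2 * int h + 1"
  shows "(\<Union>l\<in>{1..h}. {(2 * int l) mod N, (- (2 * int l)) mod N}) = {1..<N}"
proof
  show "(\<Union>l\<in>{1..h}. {(2 * int l) mod N, (- (2 * int l)) mod N}) \<subseteq> {1..<N}"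
  proof
    fix w assume "w \<in> (\<Union>l\<in>{1..h}. {(2 * int l) mod N, (- (2 * int l)) mod N})"
    then obtain l where l: "l \<in> {1..h}" "w = (2 * int l) mod N \<or> w = (- (2 * int l)) mod N" by blast
    have a: "(2 * int l) mod N = 2 * int l" using l assms by simp
    have "(- (2 * int l)) mod N = N - 2 * int l"
      using zmod_zminus1_eq_if[of "2 * int l" N] a l by simp
    then show "w \<in> {1..<N}" using l a assms by auto
  qed
next
  show "{1..<N} \<subseteq> (\<Union>l\<in>{1..h}. {(2 * int l) mod N, (- (2 * int l)) mod N})"
  proof
    fix w assume w: "w \<in> {1..<N}"
    show "w \<in> (\<Union>l\<in>{1..h}. {(2 * int l) mod N, (- (2 * int l)) mod N})"
    proof (cases "even w")
      case True
      then obtain k where k: "w = 2 * k" by blast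
      have "nat k \<in> {1..h}" using k w assms by auto
      moreover have "w = (2 * int (nat k)) mod N" using k w by auto
      ultimately show ?thesis by blast
    next
      case False
      then have "even (N - w)" using assms by simp
      then obtain k where k: "N - w = 2 * k" by blast
      have "nat k \<in> {1..h}" using k w assms by auto
      moreover have "w = (- (2 * int (nat k))) mod N"
      proof -
        have "- (2 * int (nat k)) = w - N" using k w by auto
        then have "(- (2 * int (nat k))) mod N = (w - N) mod N" by simp
        also have "\<dots> = w" using w by (simp add: mod_diff_right_eq[symmetric])
        finally show ?thesis by simp
      qed
      ultimately show ?thesis by blast
    qed
  qed
qed


lemma mod0_cong:
  fixes a b N :: int
  assumes "(a - b) mod N = 0" shows "[b = a] (mod N)"
  using assms unfolding cong_iff_dvd_diff by (metis dvd_minus_iff minus_diff_eq mod_eq_0_iff_dvd)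

lemma nat_of_cong:
  assumes "u < n" "[int u = w] (mod int n)"
  shows "u = nat (w mod int n)"
proof -
  have "int u = int u mod int n" using assms(1) by simp
  also have "\<dots> = w mod int n" using assms(2) by (simp add: cong_def)
  finally show ?thesis by simp
qed

lemma forward:
  assumes odd: "odd n" and n3: "n \<ge> 3" and D: "ext_irr_dom (cycle_V n) (cycle_E n) S lam"
  shows "\<exists>x y. strong_starter_Zn n x y"
proof -
  define N where "N = int n"
  define h where "h = (n - 1) div 2"
  define V where "V = cycle_V n"
  have Nh: "N = 2 * int h + 1" using odd by (auto simp: N_def h_def elim!: oddE)
  have nh: "n = 2 * h + 1" using Nh by (simp add: N_def)
  have V: "V = {0..<n}" by (simp add: V_def cycle_V_def)
  have SV: "S \<subseteq> V" and inj: "inj_on lam S" and cov: "\<forall>u\<in>V. \<exists>v\<in>S. gdist V (cycle_E n) u v = lam v"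
    using D by (auto simp: ext_irr_dom_def V_def)
  obtain v0 where v0: "v0 \<in> S" "lam v0 = 0" using D by (auto simp: ext_irr_dom_def)
  have finS: "finite S" using SV V finite_subset by auto
  have gd: "gdist V (cycle_E n) u v = l \<longleftrightarrow> l \<le> h \<and>
     ([int u = int v + int l] (mod N) \<or> [int u = int v - int l] (mod N))"
    if "u \<in> V" "v \<in> V" for u v l
    using gd_char[OF odd, of u v l] that by (simp add: V V_def[symmetric] N_def h_def)
  define L where "L = {l \<in> {1..h}. \<exists>c\<in>S. lam c = l}"
  define c where "c = the_inv_into S lam"
  have cS: "c l \<in> S" and lc: "lam (c l) = l" if "l \<in> L" for l
    using that inj by (auto simp: L_def c_def the_inv_into_f_f the_inv_into_into)
  define P where "P l = {u\<in>V. [int u = int (c l) + int l] (mod N) \<or> [int u = int (c l) - int l] (mod N)}" for l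
  have cover: "u = v0 \<or> (\<exists>l\<in>L. u \<in> P l)" if u: "u \<in> V" for u
  proof -
    obtain v where v: "v \<in> S" "gdist V (cycle_E n) u v = lam v" using cov u by blast
    have vV: "v \<in> V" using v SV by auto
    have g: "lam v \<le> h" "[int u = int v + int (lam v)] (mod N) \<or> [int u = int v - int (lam v)] (mod N)"
      using gd[OF u vV, of "lam v"] v by auto
    show ?thesis
    proof (cases "lam v = 0")
      case True
      then have "[int u = int v] (mod N)" using g by simp
      then have "u = v" using cong_nat_eq[of u n v] u vV by (simp add: V N_def)
      moreover have "v = v0" using inj True v0 v inj_on_eq_iff[of lam S v v0] by simp
      ultimately show ?thesis by simp
    next
      case False
      then have lL: "lam v \<in> L" using g v by (auto simp: L_def)
      have "c (lam v) = v" using inj v by (simp add: c_def the_inv_into_f_f)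
      then have "u \<in> P (lam v)" using g u by (simp add: P_def)
      then show ?thesis using lL by blast
    qed
  qed
  have cardP: "card (P l) \<le> 2" for l
  proof -
    have "P l \<subseteq> {nat ((int (c l) + int l) mod N), nat ((int (c l) - int l) mod N)}"
      using nat_of_cong by (auto simp: P_def V N_def)
    then have "card (P l) \<le> card {nat ((int (c l) + int l) mod N), nat ((int (c l) - int l) mod N)}"
      by (rule card_mono[rotated]) simp
    also have "\<dots> \<le> 2" by (simp add: card_insert_le_m1)
    finally show ?thesis .
  qed
  have finL: "finite L" by (simp add: L_def)
  have LI: "L \<subseteq> {1..h}" by (auto simp: L_def)
  have cardL: "card L \<le> h" using card_mono[OF _ LI] by simp
  have finP: "finite (P l)" for l by (simp add: P_def V)
  have cardU: "card (\<Union>l\<in>L. P l) \<le> 2 * card L"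
  proof -
    have "card (\<Union>l\<in>L. P l) \<le> (\<Sum>l\<in>L. card (P l))" by (rule card_UN_le[OF finL])
    also have "\<dots> \<le> (\<Sum>l\<in>L. 2)" by (rule sum_mono) (rule cardP)
    finally show ?thesis by simp
  qed
  have Vsub: "V \<subseteq> insert v0 (\<Union>l\<in>L. P l)" using cover by blast
  have "n \<le> card (insert v0 (\<Union>l\<in>L. P l))"
    using card_mono[OF _ Vsub] finP finL by (simp add: V)
  also have "\<dots> \<le> Suc (card (\<Union>l\<in>L. P l))" by (simp add: card_insert_le_m1 card_insert_if)
  finally have "n \<le> Suc (2 * card L)" using cardU by simp
  then have "card L = h" using cardL nh by simp
  then have Leq: "L = {1..h}" using card_subset_eq[OF _ LI] by simp
  have v0P: "v0 \<notin> P l" if "l \<in> L" for l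
  proof
    assume "v0 \<in> P l"
    then have "V \<subseteq> (\<Union>l\<in>L. P l)" using Vsub that by blast
    then have "n \<le> card (\<Union>l\<in>L. P l)"
      using card_mono[of "\<Union>l\<in>L. P l" V] finP finL by (simp add: V)
    then show False using cardU cardL nh by simp
  qed
  have cV: "c l < n" if "l \<in> L" for l using cS[OF that] SV V by auto
  have v0V: "v0 < n" using v0 SV V by auto
  define x where "x l = int (c l) + int l - int v0" for l
  define y where "y l = int (c l) - int l - int v0" for l
  have U1: "(\<Union>i\<in>{1..h}. {x i mod N, y i mod N}) = {1..<N}"
  proof
    show "(\<Union>i\<in>{1..h}. {x i mod N, y i mod N}) \<subseteq> {1..<N}"
    proof
      fix w assume "w \<in> (\<Union>i\<in>{1..h}. {x i mod N, y i mod N})"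
      then obtain i where i: "i \<in> L" "w = x i mod N \<or> w = y i mod N" using Leq by blast
      have "w \<noteq> 0"
      proof
        assume w0: "w = 0"
        from i(2) have "v0 \<in> P i"
        proof
          assume "w = x i mod N"
          then have "((int (c i) + int i) - int v0) mod N = 0" using w0 by (simp add: x_def)
          then have "[int v0 = int (c i) + int i] (mod N)" by (rule mod0_cong)
          then show "v0 \<in> P i" using v0V by (simp add: P_def V)
        next
          assume "w = y i mod N"
          then have "((int (c i) - int i) - int v0) mod N = 0" using w0 by (simp add: y_def)
          then have "[int v0 = int (c i) - int i] (mod N)" by (rule mod0_cong)
          then show "v0 \<in> P i" using v0V by (simp add: P_def V)
        qed
        then show False using v0P i(1) by blast
      qed
      moreover have "0 \<le> w" "w < N" using i(2) Nh pos_mod_bound[of N] pos_mod_sign[of N] by auto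
      ultimately show "w \<in> {1..<N}" by auto
    qed
  next
    show "{1..<N} \<subseteq> (\<Union>i\<in>{1..h}. {x i mod N, y i mod N})"
    proof
      fix w assume w: "w \<in> {1..<N}"
      define u where "u = nat ((w + int v0) mod N)"
      have uN: "int u = (w + int v0) mod N" using Nh by (simp add: u_def)
      have uV: "u \<in> V" using uN Nh pos_mod_bound[of N "w + int v0"] by (simp add: V N_def)
      have ucong: "[int u = w + int v0] (mod N)" using uN by (simp add: cong_def)
      have "u \<noteq> v0"
      proof
        assume "u = v0"
        then have "[w + int v0 = 0 + int v0] (mod N)" using ucong by (simp add: cong_sym)
        then have "[w = 0] (mod N)" unfolding cong_iff_dvd_diff by simp
        then have "w = 0" using cong_less_imp_eq_int[of w N 0] w by simp
        then show False using w by simp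
      qed
      then obtain i where i: "i \<in> L" "u \<in> P i" using cover[OF uV] by blast
      from i(2) have "[w = x i] (mod N) \<or> [w = y i] (mod N)"
        unfolding P_def
      proof (elim CollectE conjE disjE)
        assume "[int u = int (c i) + int i] (mod N)"
        then have "[w = x i] (mod N)"
          using ucong unfolding cong_iff_dvd_diff x_def
          by (rule dvd_lin3[of N _ _ 0 _ 1 "-1" 0]) (auto simp: algebra_simps)
        then show ?thesis by simp
      next
        assume "[int u = int (c i) - int i] (mod N)"
        then have "[w = y i] (mod N)"
          using ucong unfolding cong_iff_dvd_diff y_def
          by (rule dvd_lin3[of N _ _ 0 _ 1 "-1" 0]) (auto simp: algebra_simps)
        then show ?thesis by simp
      qed
      moreover have "w mod N = w" using w by simp
      ultimately have "w = x i mod N \<or> w = y i mod N" unfolding cong_def by metis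
      then show "w \<in> (\<Union>i\<in>{1..h}. {x i mod N, y i mod N})" using i(1) Leq by blast
    qed
  qed
  have U2: "(\<Union>i\<in>{1..h}. {(x i - y i) mod N, (y i - x i) mod N}) = {1..<N}"
  proof -
    have fe: "(\<lambda>i. {(x i - y i) mod N, (y i - x i) mod N}) = (\<lambda>i. {(2 * int i) mod N, (- (2 * int i)) mod N})"
      by (rule ext) (simp add: x_def y_def)
    show ?thesis using diffs_union[OF Nh] by (simp only: fe)
  qed
  have csum: "x i + y i = 2 * (int (c i) - int v0)" for i by (simp add: x_def y_def algebra_simps)
  have oddN: "odd N" using odd by (simp add: N_def)
  have INJ: "inj_on (\<lambda>i. (x i + y i) mod N) {1..h}"
  proof (rule inj_onI)
    fix i j assume ij: "i \<in> {1..h}" "j \<in> {1..h}" "(x i + y i) mod N = (x j + y j) mod N"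
    then have "[2 * (int (c i) - int v0) = 2 * (int (c j) - int v0)] (mod N)"
      by (simp add: csum cong_def)
    then have "[int (c i) - int v0 = int (c j) - int v0] (mod N)" by (rule cancel2[OF oddN])
    then have "[int (c i) = int (c j)] (mod N)" unfolding cong_iff_dvd_diff by simp
    then have "[int (c i) = int (c j)] (mod int n)" by (simp add: N_def)
    moreover have "c i < n" "c j < n" using cV[of i] cV[of j] ij(1,2) unfolding Leq by simp_all
    ultimately have cij: "c i = c j" by (intro cong_nat_eq[of "c i" n "c j"])
    have li: "lam (c i) = i" and lj: "lam (c j) = j" using lc[of i] lc[of j] ij(1,2) unfolding Leq by simp_all
    have "i = lam (c i)" using li by (rule sym)
    also have "\<dots> = lam (c j)" using cij by (rule arg_cong)
    also have "\<dots> = j" by (rule lj)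
    finally show "i = j" .
  qed
  have NZ: "(x i + y i) mod N \<noteq> 0" if i: "i \<in> {1..h}" for i
  proof
    assume "(x i + y i) mod N = 0"
    then have "[2 * (int (c i) - int v0) = 2 * 0] (mod N)" by (simp add: csum cong_def)
    then have "[int (c i) - int v0 = 0] (mod N)" by (rule cancel2[OF oddN])
    then have "[int (c i) = int v0] (mod N)" unfolding cong_iff_dvd_diff by simp
    then have "[int (c i) = int v0] (mod int n)" by (simp add: N_def)
    moreover have "c i < n" using cV[of i] i unfolding Leq by simp
    ultimately have "c i = v0" using v0V by (intro cong_nat_eq[of "c i" n v0])
    moreover have "lam (c i) = i" using lc[of i] i unfolding Leq by simp
    ultimately have "i = 0" using v0 by simp
    then show False using i by simp
  qed
  have NZ': "\<forall>i\<in>{1..h}. (x i + y i) mod N \<noteq> 0"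
  proof
    fix i assume "i \<in> {1..h}" then show "(x i + y i) mod N \<noteq> 0" by (rule NZ)
  qed
  have "strong_starter_Zn n x y"
    unfolding strong_starter_Zn_def starter_Zn_def Let_def N_def[symmetric] h_def[symmetric]
    by (intro conjI U1 U2 INJ NZ')
  then show ?thesis by blast
qed


lemma center:
  fixes N u c l x y :: int
  assumes oddN: "odd N" and hc: "[2 * c = x + y] (mod N)"
    and hl: "[2 * l = x - y] (mod N) \<or> [2 * l = y - x] (mod N)"
    and hu: "[u = x] (mod N) \<or> [u = y] (mod N)"
  shows "[u = c + l] (mod N) \<or> [u = c - l] (mod N)"
proof -
  have c': "N dvd (2 * c - (x + y))" using hc by (simp add: cong_iff_dvd_diff)
  from hu show ?thesis
  proof
    assume "[u = x] (mod N)"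
    then have u': "N dvd (u - x)" by (simp add: cong_iff_dvd_diff)
    from hl show ?thesis
    proof
      assume "[2 * l = x - y] (mod N)"
      then have l': "N dvd (2 * l - (x - y))" by (simp add: cong_iff_dvd_diff)
      have "N dvd (2 * u - 2 * (c + l))"
        by (rule dvd_lin3[OF u' c' l', of _ 2 "-1" "-1"]) (simp add: algebra_simps)
      then have "[2 * u = 2 * (c + l)] (mod N)" by (simp add: cong_iff_dvd_diff)
      then show ?thesis using cancel2[OF oddN] by blast
    next
      assume "[2 * l = y - x] (mod N)"
      then have l': "N dvd (2 * l - (y - x))" by (simp add: cong_iff_dvd_diff)
      have "N dvd (2 * u - 2 * (c - l))"
        by (rule dvd_lin3[OF u' c' l', of _ 2 "-1" 1]) (simp add: algebra_simps)
      then have "[2 * u = 2 * (c - l)] (mod N)" by (simp add: cong_iff_dvd_diff)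
      then show ?thesis using cancel2[OF oddN] by blast
    qed
  next
    assume "[u = y] (mod N)"
    then have u': "N dvd (u - y)" by (simp add: cong_iff_dvd_diff)
    from hl show ?thesis
    proof
      assume "[2 * l = x - y] (mod N)"
      then have l': "N dvd (2 * l - (x - y))" by (simp add: cong_iff_dvd_diff)
      have "N dvd (2 * u - 2 * (c - l))"
        by (rule dvd_lin3[OF u' c' l', of _ 2 "-1" 1]) (simp add: algebra_simps)
      then have "[2 * u = 2 * (c - l)] (mod N)" by (simp add: cong_iff_dvd_diff)
      then show ?thesis using cancel2[OF oddN] by blast
    next
      assume "[2 * l = y - x] (mod N)"
      then have l': "N dvd (2 * l - (y - x))" by (simp add: cong_iff_dvd_diff)
      have "N dvd (2 * u - 2 * (c + l))"
        by (rule dvd_lin3[OF u' c' l', of _ 2 "-1" "-1"]) (simp add: algebra_simps)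
      then have "[2 * u = 2 * (c + l)] (mod N)" by (simp add: cong_iff_dvd_diff)
      then show ?thesis using cancel2[OF oddN] by blast
    qed
  qed
qed

lemma combo:
  fixes N p q d :: int
  assumes "[p = d] (mod N) \<or> [p = - d] (mod N)" "[q = d] (mod N) \<or> [q = - d] (mod N)"
  shows "[p = q] (mod N) \<or> [p = - q] (mod N)"
  using assms unfolding cong_iff_dvd_diff
proof (elim disjE)
  assume a: "N dvd p - d" and b: "N dvd q - d"
  have "N dvd (p - q)" by (rule dvd_lin3[OF a b a, of _ 1 "-1" 0]) simp
  then show "N dvd p - q \<or> N dvd p - - q" by simp
next
  assume a: "N dvd p - d" and b: "N dvd q - - d"
  have "N dvd (p - - q)" by (rule dvd_lin3[OF a b a, of _ 1 1 0]) simp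
  then show "N dvd p - q \<or> N dvd p - - q" by simp
next
  assume a: "N dvd p - - d" and b: "N dvd q - d"
  have "N dvd (p - - q)" by (rule dvd_lin3[OF a b a, of _ 1 1 0]) simp
  then show "N dvd p - q \<or> N dvd p - - q" by simp
next
  assume a: "N dvd p - - d" and b: "N dvd q - - d"
  have "N dvd (p - q)" by (rule dvd_lin3[OF a b a, of _ 1 "-1" 0]) simp
  then show "N dvd p - q \<or> N dvd p - - q" by simp
qed


lemma backward:
  assumes odd: "odd n" and n3: "n \<ge> 3" and SS: "strong_starter_Zn n x y"
  shows "\<exists>S lam. ext_irr_dom (cycle_V n) (cycle_E n) S lam"
proof -
  define N where "N = int n"
  define h where "h = (n - 1) div 2"
  define V where "V = cycle_V n"
  define I where "I = {1..h}"
  have Nh: "N = 2 * int h + 1" using odd by (auto simp: N_def h_def elim!: oddE)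
  have nh: "n = 2 * h + 1" using Nh by (simp add: N_def)
  have Npos: "N > 0" using Nh by simp
  have oddN: "odd N" using Nh by simp
  have V: "V = {0..<n}" by (simp add: V_def cycle_V_def)
  have SS': "((\<Union>i\<in>I. {x i mod N, y i mod N}) = {1..<N} \<and>
       (\<Union>i\<in>I. {(x i - y i) mod N, (y i - x i) mod N}) = {1..<N}) \<and>
      inj_on (\<lambda>i. (x i + y i) mod N) I \<and> (\<forall>i\<in>I. (x i + y i) mod N \<noteq> 0)"
    using SS unfolding strong_starter_Zn_def starter_Zn_def Let_def N_def[symmetric]
      h_def[symmetric] I_def[symmetric] .
  have U1: "(\<Union>i\<in>I. {x i mod N, y i mod N}) = {1..<N}" using SS' by (rule conjunct1[THEN conjunct1])
  have U2: "(\<Union>i\<in>I. {(x i - y i) mod N, (y i - x i) mod N}) = {1..<N}"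
    using SS' by (rule conjunct1[THEN conjunct2])
  have INJ: "inj_on (\<lambda>i. (x i + y i) mod N) I" using SS' by (rule conjunct2[THEN conjunct1])
  have NZ: "\<forall>i\<in>I. (x i + y i) mod N \<noteq> 0" using SS' by (rule conjunct2[THEN conjunct2])
  define Dd where "Dd i = (x i - y i) mod N" for i
  have Ddr: "1 \<le> Dd i \<and> Dd i < N" if "i \<in> I" for i
  proof -
    have "Dd i \<in> (\<Union>i\<in>I. {(x i - y i) mod N, (y i - x i) mod N})" using that by (auto simp: Dd_def)
    then show ?thesis unfolding U2 by simp
  qed
  define lab where "lab i = nat (if even (Dd i) then Dd i div 2 else (N - Dd i) div 2)" for i
  have labP: "lab i \<in> I \<and> ([2 * int (lab i) = x i - y i] (mod N) \<or> [2 * int (lab i) = y i - x i] (mod N))"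
    if i: "i \<in> I" for i
  proof (cases "even (Dd i)")
    case True
    then obtain k where k: "Dd i = 2 * k" by blast
    have lk: "int (lab i) = k" using True k Ddr[OF i] by (simp add: lab_def)
    have "lab i \<in> I" using lk k Ddr[OF i] Nh by (auto simp: I_def)
    moreover have "[2 * int (lab i) = x i - y i] (mod N)"
    proof -
      have "(2 * k) mod N = 2 * k" using k Ddr[OF i] by simp
      then show ?thesis using lk k by (simp add: Dd_def cong_def)
    qed
    ultimately show ?thesis by blast
  next
    case False
    then have "even (N - Dd i)" using oddN by simp
    then obtain k where k: "N - Dd i = 2 * k" by blast
    have lk: "int (lab i) = k" using False k Ddr[OF i] by (simp add: lab_def)
    have "lab i \<in> I" using lk k Ddr[OF i] Nh False by (auto simp: I_def)
    moreover have "[2 * int (lab i) = y i - x i] (mod N)"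
    proof -
      have a: "N dvd (Dd i - (x i - y i))" unfolding Dd_def
        by (simp add: mod_eq_dvd_iff[symmetric])
      have b: "N dvd N" by simp
      have "N dvd (2 * int (lab i) - (y i - x i))"
        by (rule dvd_lin3[OF a b a, of _ "-1" 1 0]) (use lk k in \<open>simp add: algebra_simps\<close>)
      then show ?thesis by (simp add: cong_iff_dvd_diff)
    qed
    ultimately show ?thesis by blast
  qed
  define c where "c i = nat (((x i + y i) * (int h + 1)) mod N)" for i
  have cN: "c i < n" for i
  proof -
    have "((x i + y i) * (int h + 1)) mod N < N" using Npos by simp
    moreover have "0 \<le> ((x i + y i) * (int h + 1)) mod N" using Npos by simp
    ultimately show ?thesis by (simp add: c_def N_def nat_less_iff)
  qed
  have c2: "[2 * int (c i) = x i + y i] (mod N)" for i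
  proof -
    have ci: "int (c i) = ((x i + y i) * (int h + 1)) mod N" using Npos by (simp add: c_def)
    have a: "N dvd (int (c i) - (x i + y i) * (int h + 1))" unfolding ci
      by (simp add: mod_eq_dvd_iff[symmetric])
    have b: "N dvd (N * (x i + y i))" by simp
    have "N dvd (2 * int (c i) - (x i + y i))"
      by (rule dvd_lin3[OF a b a, of _ 2 1 0]) (use Nh in \<open>simp add: algebra_simps\<close>)
    then show ?thesis by (simp add: cong_iff_dvd_diff)
  qed
  have c0: "c i \<noteq> 0" if i: "i \<in> I" for i
  proof
    assume "c i = 0"
    then have "[0 = x i + y i] (mod N)" using c2[of i] by simp
    then have "(x i + y i) mod N = 0" by (simp add: cong_def)
    then show False using bspec[OF NZ i] by simp
  qed
  have cinj: "inj_on c I"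
  proof (rule inj_onI)
    fix i j assume ij: "i \<in> I" "j \<in> I" "c i = c j"
    have "[x i + y i = 2 * int (c i)] (mod N)" using c2[of i] by (rule cong_sym)
    also have "[2 * int (c i) = x j + y j] (mod N)" using c2[of j] ij(3) by simp
    finally have "(x i + y i) mod N = (x j + y j) mod N" by (simp add: cong_def)
    then show "i = j" using inj_onD[OF INJ _ ij(1,2)] by simp
  qed
  have labimg: "lab ` I = I"
  proof
    show "lab ` I \<subseteq> I" using labP by blast
    show "I \<subseteq> lab ` I"
    proof
      fix l assume l: "l \<in> I"
      have "(2 * int l) mod N = 2 * int l" using l Nh by (simp add: I_def)
      moreover have "2 * int l \<in> {1..<N}" using l Nh by (simp add: I_def)
      ultimately have "(2 * int l) mod N \<in> (\<Union>i\<in>I. {(x i - y i) mod N, (y i - x i) mod N})"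
        unfolding U2 by simp
      then obtain i where i: "i \<in> I"
        "(2 * int l) mod N = (x i - y i) mod N \<or> (2 * int l) mod N = (y i - x i) mod N" by blast
      have yx: "y i - x i = - (x i - y i)" by simp
      have p: "[2 * int l = x i - y i] (mod N) \<or> [2 * int l = - (x i - y i)] (mod N)"
        using i(2) unfolding cong_def yx by blast
      have q: "[2 * int (lab i) = x i - y i] (mod N) \<or> [2 * int (lab i) = - (x i - y i)] (mod N)"
        using labP[OF i(1)] unfolding yx by blast
      have "[2 * int l = 2 * int (lab i)] (mod N) \<or> [2 * int l = - (2 * int (lab i))] (mod N)"
        by (rule combo[OF p q])
      then have "[2 * int l = 2 * int (lab i)] (mod N) \<or> [2 * int l = 2 * (- int (lab i))] (mod N)"
        by simp
      then have "[int l = int (lab i)] (mod N) \<or> [int l = - int (lab i)] (mod N)"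
        using cancel2[OF oddN, of "int l" "int (lab i)"] cancel2[OF oddN, of "int l" "- int (lab i)"]
        by blast
      moreover have "lab i \<in> I" using labP[OF i(1)] by blast
      ultimately have "int l = int (lab i)"
        using pm_eq[of "int l" "int h" "int (lab i)" N] l Nh by (simp add: I_def)
      then show "l \<in> lab ` I" using i(1) by simp
    qed
  qed
  have labinj: "inj_on lab I"
  proof -
    have fI: "finite I" by (simp add: I_def)
    show ?thesis by (rule eq_card_imp_inj_on[OF fI]) (simp add: labimg)
  qed
  define S where "S = insert 0 (c ` I)"
  define lam where "lam v = (if v = 0 then 0 else lab (the_inv_into I c v))" for v
  have lamc: "lam (c i) = lab i" if "i \<in> I" for i
    using that c0[OF that] cinj by (simp add: lam_def the_inv_into_f_f)
  have lab1: "lab i \<noteq> 0" if "i \<in> I" for i using labP[OF that] by (simp add: I_def)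
  have gd: "gdist V (cycle_E n) u v = l \<longleftrightarrow> l \<le> h \<and>
     ([int u = int v + int l] (mod N) \<or> [int u = int v - int l] (mod N))"
    if "u \<in> V" "v \<in> V" for u v l
    using gd_char[OF odd, of u v l] that by (simp add: V V_def[symmetric] N_def h_def)
  have "ext_irr_dom V (cycle_E n) S lam"
    unfolding ext_irr_dom_def
  proof (intro conjI)
    show "S \<subseteq> V" using cN nh by (auto simp: S_def V)
    show "inj_on lam S"
    proof (rule inj_onI)
      fix v w assume v: "v \<in> S" and w: "w \<in> S" and e: "lam v = lam w"
      show "v = w"
      proof (cases "v = 0")
        case True
        show ?thesis
        proof (rule ccontr)
          assume "v \<noteq> w"
          then obtain j where j: "j \<in> I" "w = c j" using w True by (auto simp: S_def)
          then show False using e True lamc[OF j(1)] lab1[OF j(1)] by (simp add: lam_def)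
        qed
      next
        case False
        then obtain i where i: "i \<in> I" "v = c i" using v by (auto simp: S_def)
        show ?thesis
        proof (cases "w = 0")
          case True
          then show ?thesis using e i lamc[OF i(1)] lab1[OF i(1)] by (simp add: lam_def)
        next
          case False
          then obtain j where j: "j \<in> I" "w = c j" using w by (auto simp: S_def)
          have "lab i = lab j" using e i j lamc by simp
          then have "i = j" using inj_onD[OF labinj _ i(1) j(1)] by simp
          then show ?thesis using i j by simp
        qed
      qed
    qed
    show "\<exists>v\<in>S. lam v = 0" by (simp add: S_def lam_def)
    show "\<forall>u\<in>V. \<exists>v\<in>S. gdist V (cycle_E n) u v = lam v"
    proof
      fix u assume u: "u \<in> V"
      show "\<exists>v\<in>S. gdist V (cycle_E n) u v = lam v"
      proof (cases "u = 0")
        case True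
        have "gdist V (cycle_E n) u 0 = 0" using gd[OF u, of 0 0] u True by (simp add: V)
        then show ?thesis using True by (auto simp: S_def lam_def)
      next
        case False
        then have "int u \<in> {1..<N}" using u by (auto simp: V N_def)
        then have "int u \<in> (\<Union>i\<in>I. {x i mod N, y i mod N})" unfolding U1 .
        then obtain i where i: "i \<in> I" "int u = x i mod N \<or> int u = y i mod N" by blast
        have hu: "[int u = x i] (mod N) \<or> [int u = y i] (mod N)"
          using i(2) by (auto simp: cong_def)
        have "[int u = int (c i) + int (lab i)] (mod N) \<or> [int u = int (c i) - int (lab i)] (mod N)"
          using center[OF oddN c2[of i] _ hu] labP[OF i(1)] by blast
        moreover have "lab i \<le> h" using labP[OF i(1)] by (simp add: I_def)
        moreover have "c i \<in> V" using cN by (simp add: V)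
        ultimately have "gdist V (cycle_E n) u (c i) = lab i" using gd[OF u] by blast
        moreover have "c i \<in> S" using i(1) by (simp add: S_def)
        ultimately show ?thesis using lamc[OF i(1)] by metis
      qed
    qed
  qed
  then show ?thesis unfolding V_def by blast
qed


theorem proposition4p5:
  fixes n :: nat
  assumes "odd n" and "n \<ge> 3"
  shows "(\<exists>S lam. optimal_ext_irr_dom (cycle_V n) (cycle_E n) S lam)
         \<longleftrightarrow> (\<exists>x y. strong_starter_Zn n x y)"
proof
  assume "\<exists>S lam. optimal_ext_irr_dom (cycle_V n) (cycle_E n) S lam"
  then obtain S lam where "ext_irr_dom (cycle_V n) (cycle_E n) S lam"
    by (auto simp: optimal_ext_irr_dom_def)
  then show "\<exists>x y. strong_starter_Zn n x y" by (rule forward[OF assms])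
next
  assume "\<exists>x y. strong_starter_Zn n x y"
  then obtain x y where "strong_starter_Zn n x y" by blast
  from backward[OF assms this] obtain S lam where d: "ext_irr_dom (cycle_V n) (cycle_E n) S lam"
    by blast
  let ?P = "\<lambda>k. \<exists>S lam. ext_irr_dom (cycle_V n) (cycle_E n) S lam \<and> card S = k"
  have "?P (card S)" using d by blast
  then have "?P (LEAST k. ?P k)" by (rule LeastI)
  then obtain S' lam' where "ext_irr_dom (cycle_V n) (cycle_E n) S' lam'"
    "card S' = (LEAST k. ?P k)" by blast
  then show "\<exists>S lam. optimal_ext_irr_dom (cycle_V n) (cycle_E n) S lam"
    unfolding optimal_ext_irr_dom_def gamma_e_def by blast
qed

end
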